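(* Let $n\ge1$, $s\in(0,1)$, $\varrho\in(0,+\infty]$, and let $M:\mathbb{R}^n\times B_\varrho\to\mathbb{R}^{n\times n}$ be Lipschitz continuous with Lipschitz constant $C_M$ and such that, for some $\alpha\ge\beta>0$, $\beta|\xi|\le|M(x-y,y)\xi|\le\alpha|\xi|$ for all $x\in\mathbb{R}^n$, $y\in B_\varrho$, $\xi\in\mathbb{R}^n$. Let $K(x,z)=\dfrac{c_{n,s}\chi_{[0,\varrho)}(|x-z|)}{|M(z,x-z)(x-z)|^{n+2s}}$ (with $K(x,z)=0$ if $|x-z|\ge\varrho$). Then for every $x\in\mathbb{R}^n$, $$\int_{B_1}|y|\,|K(x,x+y)-K(x,x-y)|\,dy\le C_\star C_M\,s,$$ where $C_\star>0$ depends only on $n,\alpha,\beta$; in particular $\sup_{x\in\mathbb{R}^n}\int_{B_1}|y|\,|K(x,x+y)-K(x,x-y)|\,dy<+\infty$.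
   Context: $B_r$ is the open ball of radius $r$ centered at $0$ ($B_{+\infty}=\mathbb{R}^n$); $\chi_{[0,\varrho)}$ the indicator of $[0,\varrho)$; $c_{n,s}=\frac{2^{2s}\Gamma\left(\frac{n+2s}{2}\right)}{\pi^{n/2}\Gamma(2-s)}s(1-s)$. *)

theory Defs
  imports "HOL-Analysis.Analysis"
begin

definition c_ns :: "nat \<Rightarrow> real \<Rightarrow> real" where
  "c_ns n s = (2 powr (2 * s) * Gamma ((real n + 2 * s) / 2)) /
              (pi powr (real n / 2) * Gamma (2 - s)) * s * (1 - s)"

definition eball0 :: "ereal \<Rightarrow> ('a::real_normed_vector) set" where
  "eball0 \<rho> = {y. ereal (norm y) < \<rho>}"

definition kernelK ::
  "real \<Rightarrow> ereal \<Rightarrow> (real^'n \<Rightarrow> real^'n \<Rightarrow> real^'n^'n) \<Rightarrow> real^'n \<Rightarrow> real^'n \<Rightarrow> real" where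
  "kernelK s \<rho> M x z =
     (if ereal (norm (x - z)) < \<rho>
      then c_ns CARD('n) s / (norm (M z (x - z) *v (x - z))) powr (real CARD('n) + 2 * s)
      else 0)"

end

theory Submission
  imports Defs
begin


lemma mat_vec_norm_le:
  fixes A :: "real^'n^'m"
  shows "norm (A *v x) \<le> real CARD('m) * real CARD('n) * norm A * norm x"
proof -
  have "norm (A *v x) \<le> onorm ((*v) A) * norm x"
    by (rule onorm[OF matrix_vector_mul_bounded_linear])
  also have "onorm ((*v) A) \<le> (\<Sum>i\<in>UNIV. \<Sum>j\<in>UNIV. \<bar>A $ i $ j\<bar>)"
    by (rule onorm_le_matrix_component_sum)
  also have "\<dots> \<le> (\<Sum>i\<in>(UNIV::'m set). \<Sum>j\<in>(UNIV::'n set). norm A)"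
  proof (intro sum_mono)
    fix i j
    have "\<bar>A $ i $ j\<bar> \<le> norm (A $ i)" by (rule component_le_norm_cart)
    also have "\<dots> \<le> norm A" using Finite_Cartesian_Product.norm_nth_le[where x=A] by simp
    finally show "\<bar>A $ i $ j\<bar> \<le> norm A" .
  qed
  also have "\<dots> = real CARD('m) * real CARD('n) * norm A" by simp
  finally show ?thesis by (simp add: mult_right_mono)
qed

lemma powr_diff_le:
  fixes a b m p :: real
  assumes "0 < m" "m \<le> a" "m \<le> b" "0 < p"
  shows "\<bar>a powr (-p) - b powr (-p)\<bar> \<le> p * m powr (-p-1) * \<bar>a - b\<bar>"
proof -
  have key: "\<bar>u powr (-p) - v powr (-p)\<bar> \<le> p * m powr (-p-1) * \<bar>u - v\<bar>"
    if "m \<le> u" "u < v" for u v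
  proof -
    have "\<exists>z. u < z \<and> z < v \<and> v powr (-p) - u powr (-p) = (v - u) * ((-p) * z powr (-p - 1))"
    proof (intro MVT2)
      show "u < v" by fact
      fix x assume "u \<le> x" "x \<le> v"
      then have "0 < x" using that assms by linarith
      from has_real_derivative_powr[OF this, of "-p"]
      show "((\<lambda>z. z powr (-p)) has_real_derivative (-p) * x powr (-p - 1)) (at x)" by simp
    qed
    then obtain z where z: "u < z" "z < v" "v powr (-p) - u powr (-p) = (v - u) * ((-p) * z powr (-p - 1))"
      by blast
    have "z powr (-p-1) \<le> m powr (-p-1)"
      using z that assms by (intro powr_mono2') auto
    moreover have "0 \<le> z powr (-p-1)" by simp
    ultimately have le: "p * ((v - u) * z powr (-p-1)) \<le> p * ((v - u) * m powr (-p-1))"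
      using z assms by (intro mult_left_mono) auto
    have eq: "u powr (-p) - v powr (-p) = p * ((v - u) * z powr (-p-1))" using z(3) by (simp add: algebra_simps)
    have "0 \<le> p * ((v - u) * z powr (-p-1))" using z assms by simp
    then show ?thesis using le eq that by (simp add: mult.commute mult.left_commute)
  qed
  show ?thesis
  proof (cases a b rule: linorder_cases)
    case less then show ?thesis using key[of a b] assms by simp
  next
    case equal then show ?thesis using assms by simp
  next
    case greater then show ?thesis using key[of b a] assms by (simp add: abs_minus_commute)
  qed
qed



lemma c_ns_nonneg: "0 < s \<Longrightarrow> s < 1 \<Longrightarrow> 0 \<le> c_ns n s"
  unfolding c_ns_def
  by (intro mult_nonneg_nonneg divide_nonneg_nonneg) (auto intro!: less_imp_le[OF Gamma_real_pos])

lemma kernel_pointwise: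
  fixes M :: "real^'n \<Rightarrow> real^'n \<Rightarrow> real^'n^'n" and x y :: "real^'n"
  assumes s: "0 < s" "s < 1" and \<beta>: "0 < \<beta>"
  and L: "CM-lipschitz_on (UNIV \<times> eball0 \<rho>) (\<lambda>(x, y). M x y)"
  and H: "\<forall>x y \<xi>. y \<in> eball0 \<rho> \<longrightarrow>
         \<beta> * norm \<xi> \<le> norm (M (x - y) y *v \<xi>) \<and> norm (M (x - y) y *v \<xi>) \<le> \<alpha> * norm \<xi>"
  shows "norm y * \<bar>kernelK s \<rho> M x (x + y) - kernelK s \<rho> M x (x - y)\<bar>
    \<le> 4 * (real CARD('n))^2 * CM * c_ns CARD('n) s * (real CARD('n) + 2 * s)
        * \<beta> powr (-(real CARD('n) + 2 * s) - 1) * norm y powr (2 - (real CARD('n) + 2 * s))"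
    (is "?L \<le> ?R")
proof -
  define N where "N = real CARD('n)"
  define p where "p = N + 2 * s"
  define c where "c = c_ns CARD('n) s"
  have c0: "0 \<le> c" unfolding c_def using s by (rule c_ns_nonneg)
  have CM0: "0 \<le> CM" using L by (rule lipschitz_on_nonneg)
  have p0: "0 < p" unfolding p_def N_def using s by simp
  have R0: "0 \<le> ?R" using c0 CM0 p0 unfolding c_def p_def N_def by simp
  show ?thesis
  proof (cases "y = 0 \<or> \<not> ereal (norm y) < \<rho>")
    case True
    then show ?thesis
    proof
      assume "y = 0" then show ?thesis using R0 by simp
    next
      assume "\<not> ereal (norm y) < \<rho>"
      then have "kernelK s \<rho> M x (x + y) = 0" "kernelK s \<rho> M x (x - y) = 0"
        by (simp_all add: kernelK_def)
      then show ?thesis using R0 by simp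
    qed
  next
    case False
    then have y0: "y \<noteq> 0" and yr: "ereal (norm y) < \<rho>" by auto
    have ny: "0 < norm y" using y0 by simp
    define A where "A = M (x + y) (-y)"
    define B where "B = M (x - y) y"
    define a where "a = norm (A *v y)"
    define b where "b = norm (B *v y)"
    have Kp: "kernelK s \<rho> M x (x + y) = c * a powr (-p)"
    proof -
      have "norm (A *v (-y)) = a" unfolding a_def
        by (simp add: vec.neg)
      then have "kernelK s \<rho> M x (x + y) = c / a powr p" using yr
        by (simp add: kernelK_def A_def c_def p_def N_def)
      then show ?thesis by (simp add: powr_minus_divide)
    qed
    have Km: "kernelK s \<rho> M x (x - y) = c * b powr (-p)"
    proof -
      have "kernelK s \<rho> M x (x - y) = c / b powr p" using yr
        by (simp add: kernelK_def B_def b_def c_def p_def N_def)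
      then show ?thesis by (simp add: powr_minus_divide)
    qed
    have ymem: "y \<in> eball0 \<rho>" "-y \<in> eball0 \<rho>" using yr by (auto simp: eball0_def)
    have ha: "\<beta> * norm y \<le> a"
      using H ymem(2) unfolding a_def A_def by (metis diff_minus_eq_add)
    have hb: "\<beta> * norm y \<le> b"
      using H ymem(1) unfolding b_def B_def by blast
    have m0: "0 < \<beta> * norm y" using \<beta> ny by simp
    have AB: "norm (A - B) \<le> CM * (4 * norm y)"
    proof -
      have "dist ((\<lambda>(x, y). M x y) (x + y, -y)) ((\<lambda>(x, y). M x y) (x - y, y))
            \<le> CM * dist (x + y, -y) (x - y, y)"
        using ymem by (intro lipschitz_onD[OF L]) auto
      then have d1: "norm (A - B) \<le> CM * dist (x + y, -y) (x - y, y)"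
        unfolding A_def B_def by (simp add: dist_norm)
      have "dist (x + y, -y) (x - y, y) \<le> dist (x + y) (x - y) + dist (-y) y"
        unfolding dist_Pair_Pair by (rule sqrt_sum_squares_le_sum) auto
      also have "dist (x + y) (x - y) = norm (2 *\<^sub>R y)"
        by (simp add: dist_norm algebra_simps scaleR_2)
      also have "dist (-y) y = norm (2 *\<^sub>R y)"
        by (simp add: dist_norm algebra_simps scaleR_2)
      finally have "dist (x + y, -y) (x - y, y) \<le> 4 * norm y" by simp
      then have "CM * dist (x + y, -y) (x - y, y) \<le> CM * (4 * norm y)"
        using CM0 by (rule mult_left_mono)
      with d1 show ?thesis by linarith
    qed
    have ab1: "\<bar>a - b\<bar> \<le> norm ((A - B) *v y)" unfolding a_def b_def
      using norm_triangle_ineq3[of "A *v y" "B *v y"]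
      by (simp add: matrix_vector_mult_diff_rdistrib)
    have ab2: "norm ((A - B) *v y) \<le> N * N * norm (A - B) * norm y"
      unfolding N_def by (rule mat_vec_norm_le)
    have "N * N * norm (A - B) * norm y \<le> N * N * (CM * (4 * norm y)) * norm y"
      using AB by (intro mult_right_mono mult_left_mono) (auto simp: N_def)
    with ab1 ab2 have ab: "\<bar>a - b\<bar> \<le> N * N * (CM * (4 * norm y)) * norm y"
      by linarith
    have "\<bar>kernelK s \<rho> M x (x + y) - kernelK s \<rho> M x (x - y)\<bar> = c * \<bar>a powr (-p) - b powr (-p)\<bar>"
      using c0 by (simp add: Kp Km abs_mult right_diff_distrib[symmetric])
    also have "\<dots> \<le> c * (p * (\<beta> * norm y) powr (-p-1) * \<bar>a - b\<bar>)"
      using powr_diff_le[OF m0 ha hb p0] c0 by (rule mult_left_mono)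
    also have "\<dots> \<le> c * (p * (\<beta> * norm y) powr (-p-1) * (N * N * (CM * (4 * norm y)) * norm y))"
      using ab c0 p0 by (intro mult_left_mono) auto
    finally have K1: "\<bar>kernelK s \<rho> M x (x + y) - kernelK s \<rho> M x (x - y)\<bar>
       \<le> c * (p * (\<beta> * norm y) powr (-p-1) * (N * N * (CM * (4 * norm y)) * norm y))" .
    have "?L \<le> norm y * (c * (p * (\<beta> * norm y) powr (-p-1) * (N * N * (CM * (4 * norm y)) * norm y)))"
      using K1 by (rule mult_left_mono) simp
    also have "(\<beta> * norm y) powr (-p-1) = \<beta> powr (-p-1) * norm y powr (-p-1)"
      using \<beta> ny by (simp add: powr_mult)
    also have "norm y * (c * (p * (\<beta> powr (-p-1) * norm y powr (-p-1)) * (N * N * (CM * (4 * norm y)) * norm y)))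
       = 4 * N^2 * CM * c * p * \<beta> powr (-p-1) * (norm y powr (-p-1) * norm y ^ 3)"
      by (simp add: power2_eq_square power3_eq_cube mult_ac)
    also have "norm y powr (-p-1) * norm y ^ 3 = norm y powr (2 - p)"
    proof -
      have "norm y ^ 3 = norm y powr 3" using powr_realpow[of "norm y" 3] ny by simp
      then have "norm y powr (-p-1) * norm y ^ 3 = norm y powr (-p-1) * norm y powr 3"
        by simp
      also have "\<dots> = norm y powr ((-p-1) + 3)" by (rule powr_add[symmetric])
      finally have "norm y powr (-p-1) * norm y ^ 3 = norm y powr ((-p-1) + 3)" .
      moreover have "(-p-1) + 3 = 2 - p" by simp
      ultimately show ?thesis by metis
    qed
    finally show ?thesis by (simp add: N_def p_def c_def)
  qed
qed



lemma half_pow_powr: "((1/2::real) ^ k) powr a = ((1/2) powr a) ^ k"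
proof -
  have "((1/2::real) ^ k) = (1/2) powr (real k)" by (simp add: powr_realpow)
  then have "((1/2::real) ^ k) powr a = (1/2) powr (real k * a)" by (simp add: powr_powr)
  also have "\<dots> = ((1/2) powr a) ^ k" by (simp add: powr_power)
  finally show ?thesis .
qed

lemma shell_bound:
  fixes y :: "'a::real_normed_vector" and e :: real and N :: nat
  assumes e: "0 < e + real N" and y1: "norm y < (1/2)^j" and y2: "(1/2)^(Suc j) \<le> norm y"
  shows "norm y powr e \<le> 2 ^ N * ((1/2)^j) powr e"
proof (cases "0 \<le> e")
  case True
  have "norm y powr e \<le> ((1/2)^j) powr e" using True y1 by (intro powr_mono2) auto
  also have "\<dots> \<le> 2 ^ N * ((1/2)^j) powr e"
  proof -
    have "(1::real) \<le> 2 ^ N" by simp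
    then show ?thesis using mult_right_mono[of 1 "2^N" "((1/2::real)^j) powr e"] by simp
  qed
  finally show ?thesis .
next
  case False
  have "norm y powr e \<le> ((1/2)^(Suc j)) powr e"
    using False y2 by (intro powr_mono2') auto
  also have "((1/2::real)^(Suc j)) powr e = (1/2) powr e * ((1/2)^j) powr e"
    unfolding power_Suc by (rule powr_mult)
  also have "(1/2::real) powr e = 2 powr (-e)"
    by (simp add: powr_divide powr_minus_divide)
  also have "(2::real) powr (-e) \<le> 2 powr (real N)"
    using e by (intro powr_mono) auto
  also have "(2::real) powr (real N) = 2 ^ N" by (simp add: powr_realpow)
  finally show ?thesis by (simp add: mult_right_mono)
qed

lemma shell_integral:
  fixes D e :: real
  assumes D: "0 \<le> D" and e: "0 < e + real CARD('n)"
  shows "(\<integral>\<^sup>+ y. indicator (ball (0::real^'n) 1) y * ennreal (D * norm y powr e) \<partial>lborel)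
     \<le> ennreal (D * 2 ^ CARD('n) * unit_ball_vol (real CARD('n)) / (1 - (1/2) powr (e + real CARD('n))))"
proof -
  define N where "N = CARD('n)"
  define V where "V = unit_ball_vol (real N)"
  define r where "r k = (1/2::real)^k" for k
  define S where "S k = ball (0::real^'n) (r k) - ball 0 (r (Suc k))" for k
  define c where "c k = D * 2 ^ N * (r k) powr e" for k
  define q where "q = (1/2::real) powr (e + real N)"
  have V0: "0 \<le> V" unfolding V_def by (simp add: less_imp_le)
  have q0: "0 \<le> q" "q < 1" unfolding q_def using e N_def by (auto simp: powr01_less_one)
  have r0: "0 < r k" for k by (simp add: r_def)
  have Ssets: "S k \<in> sets lborel" for k unfolding S_def by auto
  have pw: "indicator (ball (0::real^'n) 1) y * ennreal (D * norm y powr e)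
         \<le> (\<Sum>k. ennreal (c k) * indicator (S k) y)" for y
  proof (cases "y \<in> ball 0 1 \<and> y \<noteq> 0")
    case True
    then have ny: "0 < norm y" "norm y < 1" by auto
    have "\<exists>j. \<not> r j \<le> norm y \<and> r (Suc j) \<le> norm y"
    proof (rule exists_least_lemma)
      show "\<not> r 0 \<le> norm y" using ny by (simp add: r_def)
      obtain n where "(1/2::real)^n < norm y" using real_arch_pow_inv[OF ny(1), of "1/2"] by auto
      then show "\<exists>n. r n \<le> norm y" unfolding r_def by (auto intro: less_imp_le)
    qed
    then obtain j where j0: "\<not> r j \<le> norm y" and j2: "r (Suc j) \<le> norm y" by blast
    from j0 have j1: "norm y < r j" by simp
    note j = j1 j2
    then have yS: "y \<in> S j" by (auto simp: S_def)
    have "norm y powr e \<le> 2 ^ N * (r j) powr e"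
      unfolding r_def N_def by (rule shell_bound) (use e j in \<open>auto simp: r_def N_def\<close>)
    then have "D * norm y powr e \<le> c j" unfolding c_def using D
      by (simp add: mult_left_mono mult.assoc)
    then have "indicator (ball (0::real^'n) 1) y * ennreal (D * norm y powr e) \<le> ennreal (c j) * indicator (S j) y"
      using True yS by (simp add: ennreal_leI)
    also have "\<dots> \<le> (\<Sum>k. ennreal (c k) * indicator (S k) y)"
    proof -
      define F where "F k = ennreal (c k) * indicator (S k) y" for k
      have "sum F {j} \<le> suminf F"
        by (rule sum_le_suminf) (auto intro: summableI)
      then show ?thesis by (simp add: F_def[symmetric])
    qed
    finally show ?thesis .
  next
    case False
    then have "indicator (ball (0::real^'n) 1) y * ennreal (D * norm y powr e) = 0"
      by auto
    then show ?thesis by (simp only: zero_le)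
  qed
  have "(\<integral>\<^sup>+ y. indicator (ball (0::real^'n) 1) y * ennreal (D * norm y powr e) \<partial>lborel)
      \<le> (\<integral>\<^sup>+ y. (\<Sum>k. ennreal (c k) * indicator (S k) y) \<partial>lborel)"
    by (rule nn_integral_mono) (rule pw)
  also have "\<dots> = (\<Sum>k. \<integral>\<^sup>+ y. ennreal (c k) * indicator (S k) y \<partial>lborel)"
    by (rule nn_integral_suminf) (use Ssets in auto)
  also have "\<dots> = (\<Sum>k. ennreal (c k) * emeasure lborel (S k))"
    using Ssets by (simp add: nn_integral_cmult_indicator)
  also have "\<dots> \<le> (\<Sum>k. ennreal (D * 2 ^ N * V * q ^ k))"
  proof (rule suminf_le)
    fix k
    have "emeasure lborel (S k) \<le> emeasure lborel (ball (0::real^'n) (r k))"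
      unfolding S_def by (rule emeasure_mono) auto
    also have "\<dots> = ennreal (V * r k ^ N)"
      using emeasure_ball[of "r k" "0::real^'n"] r0[of k] by (simp add: V_def N_def)
    finally have "ennreal (c k) * emeasure lborel (S k) \<le> ennreal (c k) * ennreal (V * r k ^ N)"
      by (rule mult_left_mono) simp
    also have "\<dots> = ennreal (c k * (V * r k ^ N))"
      using V0 r0[of k] D by (simp add: ennreal_mult c_def)
    also have "c k * (V * r k ^ N) = D * 2 ^ N * V * ((r k) powr e * r k ^ N)"
      by (simp add: c_def mult_ac)
    also have "(r k) powr e * r k ^ N = q ^ k"
    proof -
      have "r k ^ N = r k powr (real N)" using r0[of k] by (simp add: powr_realpow)
      then have "(r k) powr e * r k ^ N = r k powr (e + real N)" by (simp add: powr_add)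
      also have "\<dots> = q ^ k" unfolding r_def q_def by (rule half_pow_powr)
      finally show ?thesis .
    qed
    finally show "ennreal (c k) * emeasure lborel (S k) \<le> ennreal (D * 2 ^ N * V * q ^ k)" .
  qed (auto intro: summableI)
  also have "\<dots> = ennreal (\<Sum>k. D * 2 ^ N * V * q ^ k)"
    using q0 D V0 by (intro suminf_ennreal2) (auto intro!: summable_mult summable_geometric)
  also have "(\<Sum>k. D * 2 ^ N * V * q ^ k) = D * 2 ^ N * V / (1 - q)"
    using q0 by (simp add: suminf_mult suminf_geometric summable_geometric divide_inverse)
  finally show ?thesis by (simp add: N_def V_def q_def)
qed



lemma gamma_upper: "\<exists>G. \<forall>x\<in>{1/2..b}. Gamma x \<le> (G::real)"
proof -
  have "continuous_on {1/2..b} (Gamma :: real \<Rightarrow> real)"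
    by (intro continuous_at_imp_continuous_on ballI isCont_Gamma)
       (auto dest: nonpos_Ints_nonpos)
  then have "bounded (Gamma ` {1/2..b})" by (intro compact_imp_bounded compact_continuous_image) auto
  then show ?thesis by (auto simp: bounded_iff dest!: spec)
qed

lemma gamma_lower: "\<exists>g>0. \<forall>x\<in>{1..2}. (g::real) \<le> Gamma x"
proof -
  have "continuous_on {1..2} (Gamma :: real \<Rightarrow> real)"
    by (intro continuous_at_imp_continuous_on ballI isCont_Gamma)
       (auto dest: nonpos_Ints_nonpos)
  then obtain x0 :: real where x0: "x0 \<in> {1..2}" "\<forall>y\<in>{1..2}. Gamma x0 \<le> (Gamma y :: real)"
    using continuous_attains_inf[of "{1..2::real}" "Gamma :: real \<Rightarrow> real"] by auto
  have "0 < Gamma x0" using x0 by (intro Gamma_real_pos) auto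
  then show ?thesis using x0 by blast
qed

lemma c_ns_bound:
  assumes s: "0 < s" "s < 1" and n: "1 \<le> n"
    and G: "\<forall>x\<in>{1/2..real n/2+1}. Gamma x \<le> G"
    and g: "0 < g" "\<forall>x\<in>{1..2}. g \<le> Gamma x"
  shows "c_ns n s \<le> (4 * G / g) * s * (1 - s)"
proof -
  have G1: "Gamma ((real n + 2 * s) / 2) \<le> G" using G s n by auto
  have G0: "0 \<le> Gamma ((real n + 2 * s) / 2)" using s n by (intro less_imp_le[OF Gamma_real_pos]) auto
  have g1: "g \<le> Gamma (2 - s)" using g s by auto
  have p1: "2 powr (2 * s) \<le> (4::real)"
  proof -
    have "(2::real) powr (2 * s) \<le> 2 powr 2" using s by (intro powr_mono) auto
    then show ?thesis by simp
  qed
  have pi1: "1 \<le> pi powr (real n / 2)"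
    using pi_gt3 by (intro ge_one_powr_ge_zero) auto
  have num: "2 powr (2 * s) * Gamma ((real n + 2 * s) / 2) \<le> 4 * G"
    using p1 G1 G0 by (intro mult_mono) auto
  have den: "1 * g \<le> pi powr (real n / 2) * Gamma (2 - s)"
    using pi1 g1 g by (intro mult_mono) auto
  have "(2 powr (2 * s) * Gamma ((real n + 2 * s) / 2)) / (pi powr (real n / 2) * Gamma (2 - s))
        \<le> (4 * G) / (1 * g)"
    using num den g G0 G1 by (intro frac_le) auto
  then have "(2 powr (2 * s) * Gamma ((real n + 2 * s) / 2)) / (pi powr (real n / 2) * Gamma (2 - s)) * (s * (1 - s))
        \<le> (4 * G / g) * (s * (1 - s))"
    using s by (intro mult_right_mono) auto
  then show ?thesis unfolding c_ns_def by (simp add: mult.assoc)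
qed

lemma geo_bound:
  assumes s: "0 < s" "s < 1"
  shows "1 / (1 - (1/2::real) powr (2 - 2 * s)) \<le> 2 / (1 - s)"
proof -
  define u where "u = (2 - 2 * s) * ln 2"
  have l2: "2/3 \<le> ln (2::real)" by (rule ln2_ge_two_thirds)
  have "(2 - 2 * s) * (2/3) \<le> (2 - 2 * s) * ln 2" using l2 s by (intro mult_left_mono) auto
  then have u1: "(4/3) * (1 - s) \<le> u" unfolding u_def by simp
  have "0 < (4/3) * (1 - s)" using s by simp
  then have u0: "0 < u" using u1 by linarith
  have q: "(1/2::real) powr (2 - 2 * s) = exp (- u)"
    unfolding u_def powr_def by (simp add: ln_div)
  have e1: "1 + u \<le> exp u" by (rule exp_ge_add_one_self)
  have "exp (- u) = 1 / exp u" by (simp add: exp_minus divide_inverse)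
  also have "\<dots> \<le> 1 / (1 + u)" using e1 u0 by (intro divide_left_mono) auto
  finally have e2: "exp (- u) \<le> 1 / (1 + u)" .
  have e3: "1 - 1 / (1 + u) = u / (1 + u)" using u0 by (simp add: field_simps)
  have pos: "0 < u / (1 + u)" using u0 by simp
  have "1 / (1 - exp (- u)) \<le> 1 / (u / (1 + u))"
  proof -
    have h: "u / (1 + u) \<le> 1 - exp (- u)" using e2 e3 by linarith
    have "0 < (1 - exp (- u)) * (u / (1 + u))" using h pos by (intro mult_pos_pos) linarith+
    then show ?thesis using h by (intro divide_left_mono) auto
  qed
  also have "\<dots> = 1 + 1 / u" using u0 by (simp add: field_simps)
  finally have f1: "1 / (1 - exp (- u)) \<le> 1 + 1 / u" .
  have f2: "1 / u \<le> 1 / ((4/3) * (1 - s))" using u1 s by (intro divide_left_mono) auto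
  have f3: "1 / ((4/3) * (1 - s)) \<le> 1 / (1 - s)" using s by (intro divide_left_mono) auto
  have f4: "(1::real) \<le> 1 / (1 - s)" using s by simp
  have f5: "1 / (1 - s) + 1 / (1 - s) = 2 / (1 - s)" by simp
  have "1 + 1 / u \<le> 1 / (1 - s) + 1 / (1 - s)" using f4 order_trans[OF f2 f3] by (rule add_mono)
  then have "1 / (1 - exp (- u)) \<le> 2 / (1 - s)" using f1 f5 by (metis order_trans)
  then show ?thesis using q by simp
qed


theorem corollaryB4:
  fixes \<alpha> \<beta> :: real
  assumes "0 < \<beta>" and "\<beta> \<le> \<alpha>"
  shows "\<exists>Cstar > 0. \<forall>(s::real) (\<rho>::ereal) (M :: real^'n \<Rightarrow> real^'n \<Rightarrow> real^'n^'n) (CM::real).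
     0 < s \<and> s < 1 \<and> 0 < \<rho> \<and>
     CM-lipschitz_on (UNIV \<times> eball0 \<rho>) (\<lambda>(x, y). M x y) \<and>
     (\<forall>x y \<xi>. y \<in> eball0 \<rho> \<longrightarrow>
         \<beta> * norm \<xi> \<le> norm (M (x - y) y *v \<xi>) \<and> norm (M (x - y) y *v \<xi>) \<le> \<alpha> * norm \<xi>)
     \<longrightarrow>
     (\<forall>x::real^'n.
        (\<integral>\<^sup>+ y. indicator (ball 0 1) y *
            ennreal (norm y * \<bar>kernelK s \<rho> M x (x + y) - kernelK s \<rho> M x (x - y)\<bar>) \<partial>lborel)
        \<le> ennreal (Cstar * CM * s)) \<and>
     (SUP x::real^'n. \<integral>\<^sup>+ y. indicator (ball 0 1) y *
            ennreal (norm y * \<bar>kernelK s \<rho> M x (x + y) - kernelK s \<rho> M x (x - y)\<bar>) \<partial>lborel)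
        < \<infinity>"
proof -
  define N where "N = CARD('n)"
  have N1: "1 \<le> N" unfolding N_def by (simp add: Suc_le_eq)
  obtain G :: real where G: "\<forall>x\<in>{1/2..real N/2+1}. Gamma x \<le> G" using gamma_upper by blast
  obtain g :: real where g: "0 < g" "\<forall>x\<in>{1..2::real}. g \<le> Gamma x" using gamma_lower by blast
  have "(1::real) \<in> {1/2..real N/2+1}" using N1 by auto
  then have "Gamma (1::real) \<le> G" using G by blast
  then have G0: "0 \<le> G" by simp
  define A where "A = 4 * G / g"
  have A0: "0 \<le> A" unfolding A_def using G0 g by simp
  define Bb where "Bb = \<beta> powr (- real N - 1) + \<beta> powr (- real N - 3)"
  have Bb0: "0 \<le> Bb" unfolding Bb_def by simp
  define V where "V = unit_ball_vol (real N)"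
  have V0: "0 \<le> V" unfolding V_def by (simp add: less_imp_le)
  define K0 where "K0 = 4 * real N ^ 2 * A * (real N + 2) * Bb * 2 ^ N * V * 2"
  have K00: "0 \<le> K0" unfolding K0_def using A0 Bb0 V0 by simp
  have key: "(\<forall>x::real^'n.
        (\<integral>\<^sup>+ y. indicator (ball 0 1) y *
            ennreal (norm y * \<bar>kernelK s \<rho> M x (x + y) - kernelK s \<rho> M x (x - y)\<bar>) \<partial>lborel)
        \<le> ennreal ((K0 + 1) * CM * s)) \<and>
     (SUP x::real^'n. \<integral>\<^sup>+ y. indicator (ball 0 1) y *
            ennreal (norm y * \<bar>kernelK s \<rho> M x (x + y) - kernelK s \<rho> M x (x - y)\<bar>) \<partial>lborel)
        < \<infinity>"
    if H: "0 < s \<and> s < 1 \<and> 0 < \<rho> \<and>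
     CM-lipschitz_on (UNIV \<times> eball0 \<rho>) (\<lambda>(x, y). M x y) \<and>
     (\<forall>x y \<xi>. y \<in> eball0 \<rho> \<longrightarrow>
         \<beta> * norm \<xi> \<le> norm (M (x - y) y *v \<xi>) \<and> norm (M (x - y) y *v \<xi>) \<le> \<alpha> * norm \<xi>)"
    for s :: real and \<rho> :: ereal and M :: "real^'n \<Rightarrow> real^'n \<Rightarrow> real^'n^'n" and CM :: real
  proof -
    from H have s: "0 < s" "s < 1" and L: "CM-lipschitz_on (UNIV \<times> eball0 \<rho>) (\<lambda>(x, y). M x y)"
      and Hb: "\<forall>x y \<xi>. y \<in> eball0 \<rho> \<longrightarrow>
         \<beta> * norm \<xi> \<le> norm (M (x - y) y *v \<xi>) \<and> norm (M (x - y) y *v \<xi>) \<le> \<alpha> * norm \<xi>"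
      by auto
    have CM0: "0 \<le> CM" using L by (rule lipschitz_on_nonneg)
    define p where "p = real N + 2 * s"
    define D where "D = 4 * (real N)^2 * CM * c_ns N s * p * \<beta> powr (-p - 1)"
    define e where "e = 2 - p"
    define q where "q = (1/2::real) powr (e + real N)"
    have c0: "0 \<le> c_ns N s" using s by (rule c_ns_nonneg)
    have c1: "c_ns N s \<le> A * s * (1 - s)"
      unfolding A_def using c_ns_bound[OF s N1 G g] .
    have p0: "0 \<le> p" and p1: "p \<le> real N + 2" unfolding p_def using s by auto
    have bp0: "0 \<le> \<beta> powr (-p - 1)" by simp
    have bp1: "\<beta> powr (-p - 1) \<le> Bb"
    proof (cases "1 \<le> \<beta>")
      case True
      then have "\<beta> powr (-p - 1) \<le> \<beta> powr (- real N - 1)"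
        using s by (intro powr_mono) (auto simp: p_def)
      then show ?thesis unfolding Bb_def by (simp add: add_increasing2)
    next
      case False
      then have "\<beta> powr (-p - 1) \<le> \<beta> powr (- real N - 3)"
        using s assms(1) by (intro powr_mono') (auto simp: p_def)
      then show ?thesis unfolding Bb_def by (simp add: add_increasing)
    qed
    have D0: "0 \<le> D" unfolding D_def using CM0 c0 p0 by simp
    have eN: "e + real N = 2 - 2 * s" unfolding e_def p_def by simp
    have eN0: "0 < e + real CARD('n)" using eN s by (simp add: N_def)
    have qb: "1 / (1 - q) \<le> 2 / (1 - s)" unfolding q_def eN using geo_bound[OF s] .
    have q1: "q < 1" unfolding q_def eN using s by (simp add: powr01_less_one)
    have Dle: "D \<le> 4 * (real N)^2 * CM * ((A * s * (1 - s)) * (real N + 2) * Bb)"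
    proof -
      have cp: "c_ns N s * p \<le> (A * s * (1 - s)) * (real N + 2)"
        using c1 p1 _ p0 by (rule mult_mono) (use A0 s in simp)
      have nn: "0 \<le> (A * s * (1 - s)) * (real N + 2)" using A0 s by simp
      have "c_ns N s * p * \<beta> powr (-p - 1) \<le> (A * s * (1 - s)) * (real N + 2) * Bb"
        by (rule mult_mono[OF cp bp1 nn bp0])
      then have "4 * (real N)^2 * CM * (c_ns N s * p * \<beta> powr (-p - 1))
          \<le> 4 * (real N)^2 * CM * ((A * s * (1 - s)) * (real N + 2) * Bb)"
        using CM0 by (intro mult_left_mono) auto
      then show ?thesis unfolding D_def by (simp add: mult.assoc)
    qed
    have real_bound: "D * 2 ^ N * V / (1 - q) \<le> (K0 + 1) * CM * s"
    proof -
      have "D * 2 ^ N * V / (1 - q) = (D * (2 ^ N * V)) * (1 / (1 - q))" by simp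
      also have "\<dots> \<le> (4 * (real N)^2 * CM * ((A * s * (1 - s)) * (real N + 2) * Bb) * (2 ^ N * V)) * (2 / (1 - s))"
        using Dle qb q1 V0 D0 A0 Bb0 CM0 s by (intro mult_mono mult_right_mono) (auto intro!: mult_nonneg_nonneg)
      also have "\<dots> = K0 * CM * s"
        using s unfolding K0_def by (simp add: field_simps)
      also have "\<dots> \<le> (K0 + 1) * CM * s"
        using CM0 s by (intro mult_right_mono) auto
      finally show ?thesis .
    qed
    have bound: "(\<integral>\<^sup>+ y. indicator (ball 0 1) y *
            ennreal (norm y * \<bar>kernelK s \<rho> M x (x + y) - kernelK s \<rho> M x (x - y)\<bar>) \<partial>lborel)
        \<le> ennreal ((K0 + 1) * CM * s)" for x :: "real^'n"
    proof -
      have "(\<integral>\<^sup>+ y. indicator (ball 0 1) y *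
            ennreal (norm y * \<bar>kernelK s \<rho> M x (x + y) - kernelK s \<rho> M x (x - y)\<bar>) \<partial>lborel)
          \<le> (\<integral>\<^sup>+ y. indicator (ball (0::real^'n) 1) y * ennreal (D * norm y powr e) \<partial>lborel)"
      proof (rule nn_integral_mono)
        fix y :: "real^'n"
        have "norm y * \<bar>kernelK s \<rho> M x (x + y) - kernelK s \<rho> M x (x - y)\<bar> \<le> D * norm y powr e"
          using kernel_pointwise[OF s assms(1) L Hb, of y x]
          unfolding D_def e_def p_def N_def .
        then show "indicator (ball 0 1) y *
            ennreal (norm y * \<bar>kernelK s \<rho> M x (x + y) - kernelK s \<rho> M x (x - y)\<bar>)
          \<le> indicator (ball 0 1) y * ennreal (D * norm y powr e)"
          by (cases "y \<in> ball 0 1") (auto intro: ennreal_leI)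
      qed
      also have "\<dots> \<le> ennreal (D * 2 ^ CARD('n) * unit_ball_vol (real CARD('n)) / (1 - (1/2) powr (e + real CARD('n))))"
        by (rule shell_integral[OF D0 eN0])
      also have "\<dots> = ennreal (D * 2 ^ N * V / (1 - q))" by (simp add: N_def V_def q_def)
      also have "\<dots> \<le> ennreal ((K0 + 1) * CM * s)" by (rule ennreal_leI[OF real_bound])
      finally show ?thesis .
    qed
    then have b1: "\<forall>x::real^'n. (\<integral>\<^sup>+ y. indicator (ball 0 1) y *
            ennreal (norm y * \<bar>kernelK s \<rho> M x (x + y) - kernelK s \<rho> M x (x - y)\<bar>) \<partial>lborel)
        \<le> ennreal ((K0 + 1) * CM * s)" by blast
    have "(SUP x::real^'n. \<integral>\<^sup>+ y. indicator (ball 0 1) y *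
            ennreal (norm y * \<bar>kernelK s \<rho> M x (x + y) - kernelK s \<rho> M x (x - y)\<bar>) \<partial>lborel)
        \<le> ennreal ((K0 + 1) * CM * s)"
      by (rule SUP_least) (rule bound)
    then have "(SUP x::real^'n. \<integral>\<^sup>+ y. indicator (ball 0 1) y *
            ennreal (norm y * \<bar>kernelK s \<rho> M x (x + y) - kernelK s \<rho> M x (x - y)\<bar>) \<partial>lborel)
        < \<infinity>"
      using ennreal_less_top[of "(K0 + 1) * CM * s"] by (simp add: le_less_trans)
    with b1 show ?thesis by blast
  qed
  show ?thesis
  proof (rule exI[of _ "K0 + 1"], rule conjI)
    show "0 < K0 + 1" using K00 by simp
  qed (intro allI impI, erule key)
qed

end
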